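(* Let $m\ge 1$, $n\ge 2$, let $E=(d_{kl})\in\mathbb{R}^{m\times m}$ and let $F:\mathbb{R}^m\to\mathbb{R}^m$ be sufficiently smooth. Let $\phi$ be a periodic solution, with minimum period $P>0$, of the kinetic system $\dot U=F(U)$, such that the Floquet multipliers $\gamma_1,\dots,\gamma_m$ of the linearized system $\dot U=J(t)U$, $J(t)=F_U(\phi(t))$, satisfy $\gamma_1=1$ and $|\gamma_i|<1$ for $i=2,\dots,m$. Suppose that $\phi(\cdot,\epsilon)$, $\epsilon\in(-\epsilon_0,\epsilon_0)$, is a smooth family of periodic solutions of the perturbed system $(I_m+\epsilon E)\dot U=F(U)$ with $\phi(\cdot,0)=\phi$, and let $P(\epsilon)$ be the minimum period of $\phi(\cdot,\epsilon)$. Let $\mathcal{E}\in\mathbb{R}^{mn\times mn}$ be the block matrix whose diagonal $m\times m$ blocks are $(n-1)E$ and whose off-diagonal blocks are $-E$, let $\widehat J(t)=\mathrm{diag}(J(t),\dots,J(t))\in\mathbb{R}^{mn\times mn}$, and let $\Psi(t,\delta)$ be the principal fundamental matrix solution of $\dot Y=(-\delta\mathcal{E}+\widehat J(t))Y$, $Y\in\mathbb{R}^{mn}$. For $j=1,\dots,n$ let $\xi_j\in\mathbb{R}^{mn}$ be the vector whose $j$-th block (of size $m$) is $\phi_1(0):=\frac{d\phi}{dt}(0)$ and whose other blocks are $0$, and let $\eta_j\in\mathbb{R}^{mn}$ be the vector whose $j$-th block is $\frac{\partial}{\partial\epsilon}\phi(0,0)$ and whose other blocks are $0$. Define $$\tilde\xi_1:=\xi_1+\cdots+\xi_n,\qquad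 \tilde\xi_j(\delta):=\tfrac1n(\xi_{j-1}-\xi_n)+\delta(\eta_{j-1}-\eta_n),\quad j=2,\dots,n,\ \delta\ge 0.$$ Then $\Psi(P,\delta)\tilde\xi_1=\tilde\xi_1$ for all $\delta\ge0$, and for sufficiently small $\delta\ge 0$, $$\Psi(P,\delta)\tilde\xi_j(\delta)=(1-\delta nP'(0))\tilde\xi_j(\delta)+O(\delta^2),\qquad j=2,\dots,n.$$
   Context: The matrix $\widehat J(t)$ is block diagonal with $n$ copies of $J(t)$; $\dot Y=(-\delta\mathcal{E}+\widehat J(t))Y$ is the linearization of the $n$-patch model $\dot{\mathcal U}=-\delta\mathcal E\mathcal U+(F(U^1),\dots,F(U^n))^T$ about the synchronous periodic solution $(\phi^T,\dots,\phi^T)^T$. $P'(0)$ denotes the derivative of the period function $P(\epsilon)$ at $\epsilon=0$. *)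

theory Defs
  imports "HOL-Analysis.Analysis" "HOL-Computational_Algebra.Polynomial"
begin

definition C2_on :: "'a::euclidean_space set \<Rightarrow> ('a \<Rightarrow> 'b::real_normed_vector) \<Rightarrow> bool" where
  "C2_on S f \<longleftrightarrow> open S \<and>
     (\<exists>(f' :: 'a \<Rightarrow> ('a \<Rightarrow>\<^sub>L 'b)) (f'' :: 'a \<Rightarrow> ('a \<Rightarrow>\<^sub>L ('a \<Rightarrow>\<^sub>L 'b))).
        (\<forall>x\<in>S. (f has_derivative blinfun_apply (f' x)) (at x)) \<and>
        (\<forall>x\<in>S. (f' has_derivative blinfun_apply (f'' x)) (at x)) \<and>
        continuous_on S f'')"

definition min_period :: "(real \<Rightarrow> 'a) \<Rightarrow> real \<Rightarrow> bool" where
  "min_period u P \<longleftrightarrow> P > 0 \<and> (\<forall>t. u (t + P) = u t) \<and>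
     (\<forall>q. 0 < q \<and> q < P \<longrightarrow> (\<exists>t. u (t + q) \<noteq> u t))"

definition charpoly :: "real^'m^'m \<Rightarrow> real poly" where
  "charpoly M = det (\<chi> i j. (if i = j then [:0, 1:] else 0) - [:M $ i $ j:])"

text \<open>The Floquet multipliers (eigenvalues of the monodromy matrix M, counted with
  algebraic multiplicity) are 1 (simple) and others of modulus < 1.\<close>
definition floquet_hyperbolic :: "real^'m^'m \<Rightarrow> bool" where
  "floquet_hyperbolic M \<longleftrightarrow>
     (let p = map_poly complex_of_real (charpoly M) in
        order 1 p = 1 \<and> (\<forall>z. poly p z = 0 \<longrightarrow> z = 1 \<or> cmod z < 1))"

definition principal_fundamental :: "(real \<Rightarrow> real^'k^'k) \<Rightarrow> (real \<Rightarrow> real^'k^'k) \<Rightarrow> bool" where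
  "principal_fundamental A X \<longleftrightarrow> X 0 = mat 1 \<and>
     (\<forall>t. (X has_vector_derivative (A t ** X t)) (at t))"

text \<open>Coupling matrix on R^(mn), indexed by (patch, component).\<close>
definition coupling :: "real^'m^'m \<Rightarrow> real^('n::finite \<times> 'm)^('n \<times> 'm)" where
  "coupling E = (\<chi> i j. if fst i = fst j then (real CARD('n) - 1) * E $ snd i $ snd j else - E $ snd i $ snd j)"

definition blockdiag :: "real^'m^'m \<Rightarrow> real^('n::finite \<times> 'm)^('n \<times> 'm)" where
  "blockdiag A = (\<chi> i j. if fst i = fst j then A $ snd i $ snd j else 0)"

definition blockvec :: "'n::finite \<Rightarrow> real^'m \<Rightarrow> real^('n \<times> 'm)" where
  "blockvec a v = (\<chi> i. if fst i = a then v $ snd i else 0)"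

end

theory Submission
  imports Defs
begin



lemma vd_chain:
  fixes f :: "'a::real_normed_vector \<Rightarrow> 'b::real_normed_vector"
  assumes "(f has_derivative D) (at (x + u *\<^sub>R a))"
  shows "((\<lambda>u. f (x + u *\<^sub>R a)) has_vector_derivative D a) (at u)"
proof -
  have p: "((\<lambda>u. x + u *\<^sub>R a) has_derivative (\<lambda>t. t *\<^sub>R a)) (at u)"
    by (auto intro!: derivative_eq_intros)
  have "((f \<circ> (\<lambda>u. x + u *\<^sub>R a)) has_derivative (D \<circ> (\<lambda>t. t *\<^sub>R a))) (at u)"
    by (rule diff_chain_at[OF p assms])
  moreover have "linear D" using assms has_derivative_linear by blast
  ultimately show ?thesis unfolding has_vector_derivative_def
    by (simp add: o_def linear_cmul)
qed

lemma bl2_norm: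
  fixes F :: "'a::real_normed_vector \<Rightarrow>\<^sub>L 'a \<Rightarrow>\<^sub>L 'b::real_normed_vector"
  shows "norm (F b a) \<le> norm F * norm b * norm a"
  by (meson norm_blinfun order_trans mult_right_mono norm_ge_zero)

lemma bound01:
  fixes g :: "real \<Rightarrow> 'b::real_normed_vector"
  assumes "\<And>u. u \<in> {0..1} \<Longrightarrow> (g has_vector_derivative g' u) (at u)"
    and "\<And>u. u \<in> {0..1} \<Longrightarrow> norm (g' u) \<le> B"
  shows "norm (g 1 - g 0) \<le> B"
proof -
  have c: "continuous_on {0..1} g"
    using assms(1) by (meson continuous_at_imp_continuous_on has_vector_derivative_continuous)
  have "norm (g 1 - g 0) \<le> (\<lambda>u. u * B) 1 - (\<lambda>u. u * B) 0"
    apply (rule differentiable_bound_general[where f' = g' and \<phi>' = "\<lambda>_. B"])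
    using c assms by (auto intro!: continuous_intros derivative_eq_intros)
  then show ?thesis by simp
qed

lemma schwarz_core:
  fixes f :: "'a::real_normed_vector \<Rightarrow> 'b::real_normed_vector"
    and f' :: "'a \<Rightarrow> 'a \<Rightarrow>\<^sub>L 'b" and f'' :: "'a \<Rightarrow> 'a \<Rightarrow>\<^sub>L 'a \<Rightarrow>\<^sub>L 'b"
  assumes d1: "\<And>y. y \<in> ball x r \<Longrightarrow> (f has_derivative blinfun_apply (f' y)) (at y)"
    and d2: "\<And>y. y \<in> ball x r \<Longrightarrow> (f' has_derivative blinfun_apply (f'' y)) (at y)"
    and bnd: "\<And>y. y \<in> ball x r \<Longrightarrow> norm (f'' y - f'' x) \<le> \<epsilon>"
    and ab: "norm a + norm b < r"
  shows "norm ((f (x+a+b) - f (x+a) - f (x+b) + f x) - f'' x b a) \<le> \<epsilon> * norm a * norm b"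
proof -
  have inball: "x + u *\<^sub>R a + v *\<^sub>R b \<in> ball x r" if "u \<in> {0..1}" "v \<in> {0..1}" for u v
  proof -
    have "norm (u *\<^sub>R a + v *\<^sub>R b) \<le> norm a + norm b"
      using that by (smt (verit, best) atLeastAtMost_iff mult_left_le_one_le norm_ge_zero norm_scaleR norm_triangle_ineq)
    moreover have "norm (- (u *\<^sub>R a) - v *\<^sub>R b) = norm (u *\<^sub>R a + v *\<^sub>R b)"
    proof -
      have "- (u *\<^sub>R a) - v *\<^sub>R b = -(u *\<^sub>R a + v *\<^sub>R b)" by simp
      then show ?thesis by (simp only: norm_minus_cancel)
    qed
    ultimately show ?thesis using ab by (simp add: dist_norm add.assoc)
  qed
  have inner: "norm (f' (x + u *\<^sub>R a + b) a - f' (x + u *\<^sub>R a) a - f'' x b a) \<le> \<epsilon> * norm a * norm b"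
    if u: "u \<in> {0..1}" for u
  proof -
    define y0 where "y0 = x + u *\<^sub>R a"
    define q where "q = (\<lambda>v. f' (y0 + v *\<^sub>R b) a - v *\<^sub>R f'' x b a)"
    have "norm (q 1 - q 0) \<le> \<epsilon> * norm a * norm b"
    proof (rule bound01[where g' = "\<lambda>v. f'' (y0 + v *\<^sub>R b) b a - f'' x b a"])
      fix v :: real assume v: "v \<in> {0..1}"
      have yb: "y0 + v *\<^sub>R b \<in> ball x r" using inball[OF u v] by (simp add: y0_def)
      have "((\<lambda>v. f' (y0 + v *\<^sub>R b)) has_vector_derivative f'' (y0 + v *\<^sub>R b) b) (at v)"
        by (rule vd_chain, rule d2[OF yb])
      then have "((\<lambda>v. f' (y0 + v *\<^sub>R b) a) has_vector_derivative f'' (y0 + v *\<^sub>R b) b a) (at v)"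
        using bounded_linear.has_vector_derivative[OF blinfun.bounded_linear_left] by blast
      then show "(q has_vector_derivative f'' (y0 + v *\<^sub>R b) b a - f'' x b a) (at v)"
        unfolding q_def by (auto intro!: derivative_eq_intros)
      have "norm (f'' (y0 + v *\<^sub>R b) b a - f'' x b a) = norm ((f'' (y0 + v *\<^sub>R b) - f'' x) b a)"
        by (simp add: blinfun.diff_left)
      also have "\<dots> \<le> norm (f'' (y0 + v *\<^sub>R b) - f'' x) * norm b * norm a" by (rule bl2_norm)
      also have "\<dots> \<le> \<epsilon> * norm b * norm a"
        using bnd[OF yb] by (simp add: mult_right_mono)
      finally show "norm (f'' (y0 + v *\<^sub>R b) b a - f'' x b a) \<le> \<epsilon> * norm a * norm b"
        by (simp add: mult_ac)
    qed
    then show ?thesis by (simp add: q_def y0_def algebra_simps)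
  qed
  define g where "g = (\<lambda>u. f (x + b + u *\<^sub>R a) - f (x + u *\<^sub>R a) - u *\<^sub>R f'' x b a)"
  have "norm (g 1 - g 0) \<le> \<epsilon> * norm a * norm b"
  proof (rule bound01[where g' = "\<lambda>u. f' (x + u *\<^sub>R a + b) a - f' (x + u *\<^sub>R a) a - f'' x b a"])
    fix u :: real assume u: "u \<in> {0..1}"
    have y1: "x + b + u *\<^sub>R a \<in> ball x r" using inball[OF u, of 1] by (simp add: algebra_simps)
    have y2: "x + u *\<^sub>R a \<in> ball x r" using inball[OF u, of 0] by simp
    have h1: "((\<lambda>u. f (x + b + u *\<^sub>R a)) has_vector_derivative f' (x + b + u *\<^sub>R a) a) (at u)"
      by (rule vd_chain, rule d1[OF y1])
    have h2: "((\<lambda>u. f (x + u *\<^sub>R a)) has_vector_derivative f' (x + u *\<^sub>R a) a) (at u)"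
      by (rule vd_chain, rule d1[OF y2])
    show "(g has_vector_derivative f' (x + u *\<^sub>R a + b) a - f' (x + u *\<^sub>R a) a - f'' x b a) (at u)"
      unfolding g_def using h1 h2 by (auto intro!: derivative_eq_intros simp: algebra_simps)
    show "norm (f' (x + u *\<^sub>R a + b) a - f' (x + u *\<^sub>R a) a - f'' x b a) \<le> \<epsilon> * norm a * norm b"
      by (rule inner[OF u])
  qed
  then show ?thesis by (simp add: g_def algebra_simps)
qed

lemma schwarz:
  fixes f :: "'a::real_normed_vector \<Rightarrow> 'b::real_normed_vector"
    and f' :: "'a \<Rightarrow> 'a \<Rightarrow>\<^sub>L 'b" and f'' :: "'a \<Rightarrow> 'a \<Rightarrow>\<^sub>L 'a \<Rightarrow>\<^sub>L 'b"
  assumes S: "open S" "x \<in> S"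
    and d1: "\<And>y. y \<in> S \<Longrightarrow> (f has_derivative blinfun_apply (f' y)) (at y)"
    and d2: "\<And>y. y \<in> S \<Longrightarrow> (f' has_derivative blinfun_apply (f'' y)) (at y)"
    and c: "continuous (at x) f''"
  shows "f'' x k h = f'' x h k"
proof -
  define c0 where "c0 = norm (f'' x k h - f'' x h k)"
  have "c0 \<le> e" if e: "e > 0" for e
  proof -
    define \<epsilon> where "\<epsilon> = e / (2 * (norm h * norm k + 1))"
    have \<epsilon>pos: "\<epsilon> > 0" using e unfolding \<epsilon>_def by (intro divide_pos_pos) (auto intro: add_nonneg_pos)
    obtain r1 where r1: "r1 > 0" "\<And>y. dist y x < r1 \<Longrightarrow> dist (f'' y) (f'' x) < \<epsilon>"
      using c \<epsilon>pos unfolding continuous_at_eps_delta by blast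
    obtain r2 where r2: "r2 > 0" "ball x r2 \<subseteq> S"
      using S openE by blast
    define r where "r = min r1 r2"
    have rpos: "r > 0" using r1 r2 by (simp add: r_def)
    define s where "s = r / (2 * (norm h + norm k + 1))"
    have spos: "s > 0" using rpos unfolding s_def by (intro divide_pos_pos) (auto intro: add_nonneg_pos)
    define a where "a = s *\<^sub>R h"
    define b where "b = s *\<^sub>R k"
    have ab: "norm a + norm b < r" "norm b + norm a < r"
    proof -
      have "norm a + norm b = s * (norm h + norm k)" using spos by (simp add: a_def b_def algebra_simps)
      also have "\<dots> < r"
      proof -
        have X: "0 \<le> norm h + norm k" by simp
        have D: "2 * (norm h + norm k + 1) > 0" using X by (smt (verit))
        have "s * (norm h + norm k) = r * (norm h + norm k) / (2 * (norm h + norm k + 1))"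
          by (simp add: s_def)
        also have "\<dots> < r"
        proof -
          have "norm h + norm k < 2 * (norm h + norm k + 1)" using X by (simp only: distrib_left)
          then have "r * (norm h + norm k) < r * (2 * (norm h + norm k + 1))"
            using rpos by (rule mult_strict_left_mono)
          then show ?thesis by (simp only: pos_divide_less_eq[OF D] mult.commute)
        qed
        finally show ?thesis .
      qed
      finally show "norm a + norm b < r" "norm b + norm a < r" by simp_all
    qed
    have sub: "ball x r \<subseteq> S" using r2 by (auto simp: r_def)
    have bnd: "\<And>y. y \<in> ball x r \<Longrightarrow> norm (f'' y - f'' x) \<le> \<epsilon>"
      using r1 by (auto simp: r_def dist_norm norm_minus_commute less_imp_le)
    have e1: "norm ((f (x+a+b) - f (x+a) - f (x+b) + f x) - f'' x b a) \<le> \<epsilon> * norm a * norm b"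
      by (rule schwarz_core[OF d1 d2 bnd ab(1)]) (use sub in auto)
    have e2: "norm ((f (x+b+a) - f (x+b) - f (x+a) + f x) - f'' x a b) \<le> \<epsilon> * norm b * norm a"
      by (rule schwarz_core[OF d1 d2 bnd ab(2)]) (use sub in auto)
    have "norm (f'' x b a - f'' x a b) \<le> 2 * \<epsilon> * norm a * norm b"
    proof -
      have "f'' x b a - f'' x a b = ((f (x+b+a) - f (x+b) - f (x+a) + f x) - f'' x a b)
            - ((f (x+a+b) - f (x+a) - f (x+b) + f x) - f'' x b a)"
        by (simp add: algebra_simps)
      also have "norm \<dots> \<le> \<epsilon> * norm b * norm a + \<epsilon> * norm a * norm b"
        using e1 e2 norm_triangle_ineq4 by (smt (verit))
      finally show ?thesis by (simp add: mult_ac)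
    qed
    moreover have "f'' x b a - f'' x a b = (s * s) *\<^sub>R (f'' x k h - f'' x h k)"
      by (simp add: a_def b_def blinfun.scaleR_left blinfun.scaleR_right scaleR_diff_right)
    moreover have "2 * \<epsilon> * norm a * norm b = (s * s) * (2 * \<epsilon> * norm h * norm k)"
      using spos by (simp add: a_def b_def)
    ultimately have "(s * s) * c0 \<le> (s * s) * (2 * \<epsilon> * norm h * norm k)"
      using spos by (simp add: c0_def)
    then have "c0 \<le> 2 * \<epsilon> * norm h * norm k" using spos by simp
    also have "\<dots> \<le> e"
    proof -
      have P1: "0 < norm h * norm k + 1" by (smt (verit) mult_nonneg_nonneg norm_ge_zero)
      have "2 * \<epsilon> * norm h * norm k = e * (norm h * norm k) / (norm h * norm k + 1)"
        unfolding \<epsilon>_def using P1 by (simp add: field_simps)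
      also have "\<dots> \<le> e"
        unfolding pos_divide_le_eq[OF P1] using e by (simp add: algebra_simps)
      finally show ?thesis .
    qed
    finally show ?thesis .
  qed
  then have "c0 \<le> 0" by (meson dense_ge)
  then show ?thesis by (simp add: c0_def)
qed



lemma inner_self_deriv:
  fixes D :: "real \<Rightarrow> 'v::real_inner"
  assumes "(D has_vector_derivative V) (at t)"
  shows "((\<lambda>t. D t \<bullet> D t) has_real_derivative 2 * (D t \<bullet> V)) (at t)"
proof -
  have d: "(D has_derivative (\<lambda>h. h *\<^sub>R V)) (at t)" using assms by (simp add: has_vector_derivative_def)
  have "((\<lambda>t. D t \<bullet> D t) has_derivative (\<lambda>h. D t \<bullet> (h *\<^sub>R V) + (h *\<^sub>R V) \<bullet> D t)) (at t)"
    by (rule has_derivative_inner[OF d d])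
  then show ?thesis unfolding has_field_derivative_def
    by (simp add: inner_commute algebra_simps mult.commute[of _ 2] mult.assoc)
       (metis (no_types, lifting) ext mult.commute)
qed

lemma gronwall_lin:
  fixes D :: "real \<Rightarrow> 'v::real_inner"
  assumes T: "T \<ge> 0"
    and der: "\<And>t. (D has_vector_derivative D' t) (at t)"
    and lin: "\<And>t. t \<in> {0..T} \<Longrightarrow> D t \<bullet> D' t \<le> L * (norm (D t))\<^sup>2 + K * norm (D t)"
    and L: "L \<ge> 0" and K: "K \<ge> 0" and D0: "D 0 = 0"
  shows "(norm (D T))\<^sup>2 \<le> K\<^sup>2 * T * exp ((2*L+1)*T)"
proof -
  define c where "c = 2*L+1"
  define g where "g = (\<lambda>t. exp (-c*t) * (D t \<bullet> D t) - K\<^sup>2 * t)"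
  have gd: "(g has_real_derivative (-c * exp (-c*t) * (D t \<bullet> D t) + exp (-c*t) * (2 * (D t \<bullet> D' t)) - K\<^sup>2)) (at t)" for t
    unfolding g_def
    by (rule derivative_eq_intros inner_self_deriv[OF der] refl | simp)+
  have "g T \<le> g 0"
  proof (rule DERIV_nonpos_imp_decreasing_open[OF T])
    fix t assume t: "0 < t" "t < T"
    let ?e = "exp (-c*t)"
    have e1: "?e \<le> 1" using t L by (simp add: c_def mult_nonpos_nonneg)
    have e0: "?e > 0" by simp
    have "2 * (D t \<bullet> D' t) \<le> 2 * L * (norm (D t))\<^sup>2 + 2 * K * norm (D t)"
      using lin[of t] t by auto
    also have "2 * K * norm (D t) \<le> (norm (D t))\<^sup>2 + K\<^sup>2"
      by (smt (verit) sum_squares_bound)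
    finally have "2 * (D t \<bullet> D' t) \<le> c * (D t \<bullet> D t) + K\<^sup>2"
      by (simp add: c_def power2_norm_eq_inner algebra_simps)
    then have "?e * (2 * (D t \<bullet> D' t)) \<le> ?e * (c * (D t \<bullet> D t) + K\<^sup>2)"
      using e0 by (simp add: mult_left_mono)
    then have "-c * ?e * (D t \<bullet> D t) + ?e * (2 * (D t \<bullet> D' t)) - K\<^sup>2 \<le> ?e * K\<^sup>2 - K\<^sup>2"
      by (simp add: algebra_simps)
    also have "\<dots> \<le> 0" using e1 by (simp add: mult_left_le_one_le)
    finally show "\<exists>y. (g has_real_derivative y) (at t) \<and> y \<le> 0" using gd by blast
  next
    show "continuous_on {0..T} g"
      using gd by (meson DERIV_isCont continuous_at_imp_continuous_on)
  qed
  then have "exp (-c*T) * (D T \<bullet> D T) \<le> K\<^sup>2 * T" by (simp add: g_def D0)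
  then have "D T \<bullet> D T \<le> K\<^sup>2 * T * exp (c*T)"
    by (simp add: exp_minus field_simps)
  then show ?thesis by (simp add: c_def power2_norm_eq_inner)
qed


lemma bv_comp: "blockvec a v $ i = (if fst i = a then v $ snd i else 0)"
  by (simp add: blockvec_def)

lemma sum_pair_UNIV: "(\<Sum>i\<in>(UNIV::('a::finite \<times> 'b::finite) set). f i) = (\<Sum>c\<in>UNIV. \<Sum>j\<in>UNIV. f (c, j))"
proof -
  have "(\<Sum>c\<in>UNIV. \<Sum>j\<in>UNIV. f (c, j)) = (\<Sum>(c, j)\<in>UNIV \<times> UNIV. f (c, j))"
    by (rule sum.cartesian_product)
  then show ?thesis by (simp add: case_prod_eta)
qed

lemma sum_bv: "(\<Sum>i\<in>UNIV. f i * blockvec a v $ i) = (\<Sum>j\<in>UNIV. f (a, j) * v $ j)"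
proof -
  have "(\<Sum>i\<in>UNIV. f i * blockvec a v $ i) = (\<Sum>c\<in>UNIV. if c = a then (\<Sum>j\<in>UNIV. f (c, j) * v $ j) else 0)"
  proof -
    have "(\<Sum>j\<in>UNIV. f (c, j) * blockvec a v $ (c, j)) = (if c = a then (\<Sum>j\<in>UNIV. f (c, j) * v $ j) else 0)" for c
      by (cases "c = a") (simp_all add: bv_comp)
    then show ?thesis by (simp add: sum_pair_UNIV)
  qed
  also have "\<dots> = (\<Sum>j\<in>UNIV. f (a, j) * v $ j)" by (simp add: sum.delta')
  finally show ?thesis .
qed

lemma blockdiag_bv: "blockdiag M *v blockvec a v = blockvec a (M *v v)"
proof -
  have "(blockdiag M *v blockvec a v) $ (c, i) = blockvec a (M *v v) $ (c, i)" for c i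
    by (simp add: matrix_vector_mult_def sum_bv) (simp add: blockdiag_def bv_comp)
  then show ?thesis by (simp add: vec_eq_iff)
qed

lemma coupling_bv: "(coupling E *v blockvec (a::'n::finite) v) $ ci =
   (if fst ci = a then real CARD('n) - 1 else -1) * (E *v v) $ snd ci"
proof (cases ci)
  case (Pair c i)
  have "(coupling E *v blockvec a v) $ (c, i) = (\<Sum>j\<in>UNIV. (if c = a then (real CARD('n) - 1) * E $ i $ j else - E $ i $ j) * v $ j)"
    by (simp add: matrix_vector_mult_def sum_bv) (simp add: coupling_def, simp only: snd_conv)
  also have "\<dots> = (if c = a then real CARD('n) - 1 else -1) * (E *v v) $ i"
    by (simp add: matrix_vector_mult_def sum_distrib_left sum_negf mult.assoc)
  finally show ?thesis using Pair by simp
qed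

lemma msum_bound:
  fixes A :: "real^'n^'m"
  shows "norm (A *v x) \<le> (\<Sum>i\<in>UNIV. \<Sum>j\<in>UNIV. \<bar>A $ i $ j\<bar>) * norm x"
proof -
  have "norm (A *v x) \<le> onorm ((*v) A) * norm x" by (rule onorm[OF matrix_vector_mul_bounded_linear])
  also have "\<dots> \<le> (\<Sum>i\<in>UNIV. \<Sum>j\<in>UNIV. \<bar>A $ i $ j\<bar>) * norm x"
    by (rule mult_right_mono[OF onorm_le_matrix_component_sum norm_ge_zero])
  finally show ?thesis .
qed

lemma bl_mv: "bounded_linear (\<lambda>M::real^'n^'m. M *v x)"
proof -
  have "linear (\<lambda>M::real^'n^'m. M *v x)"
    by (rule linearI) (simp_all add: matrix_vector_mult_add_rdistrib scaleR_matrix_vector_assoc)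
  then show ?thesis by (simp add: linear_conv_bounded_linear)
qed

lemma bl_bv: "bounded_linear (blockvec a)"
proof -
  have "linear (blockvec a)"
    by (rule linearI) (simp_all add: vec_eq_iff bv_comp)
  then show ?thesis by (simp add: linear_conv_bounded_linear)
qed




lemma vd_comp:
  fixes f :: "'a::real_normed_vector \<Rightarrow> 'b::real_normed_vector"
  assumes g: "(g has_vector_derivative g') (at t)"
    and f: "(f has_derivative D) (at (g t))"
  shows "((\<lambda>t. f (g t)) has_vector_derivative D g') (at t)"
proof -
  have p: "(g has_derivative (\<lambda>s. s *\<^sub>R g')) (at t)" using g by (simp add: has_vector_derivative_def)
  have "((f \<circ> g) has_derivative (D \<circ> (\<lambda>s. s *\<^sub>R g'))) (at t)"
    by (rule diff_chain_at[OF p f])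
  moreover have "linear D" using f has_derivative_linear by blast
  ultimately show ?thesis unfolding has_vector_derivative_def
    by (simp add: o_def linear_cmul)
qed

lemma compare:
  fixes \<Psi> A :: "real \<Rightarrow> real^'k^'k" and Z H :: "real \<Rightarrow> real^'k"
  assumes \<Psi>0: "\<Psi> 0 = mat 1"
    and \<Psi>d: "\<And>t. (\<Psi> has_vector_derivative (A t ** \<Psi> t)) (at t)"
    and Zd: "\<And>t. (Z has_vector_derivative (A t *v Z t + H t)) (at t)"
    and T: "T \<ge> 0"
    and Lb: "\<And>t x. t \<in> {0..T} \<Longrightarrow> norm (A t *v x) \<le> L * norm x"
    and Kb: "\<And>t. t \<in> {0..T} \<Longrightarrow> norm (H t) \<le> K"
    and L: "L \<ge> 0" and K: "K \<ge> 0"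
  shows "norm (Z T - \<Psi> T *v Z 0) \<le> K * sqrt (T * exp ((2*L+1)*T))"
proof -
  define D where "D = (\<lambda>t. Z t - \<Psi> t *v Z 0)"
  have Dd: "(D has_vector_derivative (A t *v D t + H t)) (at t)" for t
  proof -
    have "((\<lambda>t. \<Psi> t *v Z 0) has_vector_derivative ((A t ** \<Psi> t) *v Z 0)) (at t)"
      by (rule bounded_linear.has_vector_derivative[OF bl_mv \<Psi>d])
    from has_vector_derivative_diff[OF Zd this]
    show ?thesis unfolding D_def
      by (simp add: matrix_vector_mul_assoc[symmetric] matrix_vector_right_distrib
          matrix_vector_mult_diff_distrib algebra_simps)
  qed
  have "(norm (D T))\<^sup>2 \<le> K\<^sup>2 * T * exp ((2*L+1)*T)"
  proof (rule gronwall_lin[OF T Dd _ L K])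
    fix t assume t: "t \<in> {0..T}"
    have "D t \<bullet> (A t *v D t + H t) = D t \<bullet> (A t *v D t) + D t \<bullet> H t" by (simp add: inner_add_right)
    also have "\<dots> \<le> norm (D t) * norm (A t *v D t) + norm (D t) * norm (H t)"
      by (intro add_mono; metis Cauchy_Schwarz_ineq2 abs_le_D1)
    also have "\<dots> \<le> norm (D t) * (L * norm (D t)) + norm (D t) * K"
      by (intro add_mono mult_left_mono Lb Kb t norm_ge_zero)
    finally show "D t \<bullet> (A t *v D t + H t) \<le> L * (norm (D t))\<^sup>2 + K * norm (D t)"
      by (simp add: power2_eq_square algebra_simps)
  next
    show "D 0 = 0" by (simp add: D_def \<Psi>0)
  qed
  then have "norm (D T) \<le> sqrt (K\<^sup>2 * T * exp ((2*L+1)*T))"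
    by (simp add: real_le_rsqrt)
  also have "\<dots> = K * sqrt (T * exp ((2*L+1)*T))"
    using K by (simp add: real_sqrt_mult mult.assoc)
  finally show ?thesis by (simp add: D_def)
qed



lemma min_period_unique:
  assumes "min_period u P" "min_period u Q" shows "P = Q"
proof (rule ccontr)
  assume "P \<noteq> Q"
  then consider "P < Q" | "Q < P" by linarith
  then show False
  proof cases
    case 1
    then obtain t where "u (t + P) \<noteq> u t" using assms unfolding min_period_def by blast
    then show False using assms(1) unfolding min_period_def by blast
  next
    case 2
    then obtain t where "u (t + Q) \<noteq> u t" using assms unfolding min_period_def by blast
    then show False using assms(2) unfolding min_period_def by blast
  qed
qed

lemma coupling_sum: "coupling E *v (\<Sum>a\<in>UNIV. blockvec (a::'n::finite) v) = 0"
proof -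
  have s: "(\<Sum>a\<in>UNIV. (if c = a then real CARD('n) - 1 else -1)) = 0" for c :: 'n
  proof -
    have "(\<Sum>a\<in>UNIV. (if c = a then real CARD('n) - 1 else -1)) = (\<Sum>a\<in>UNIV. (if c = a then real CARD('n) else 0) - 1)"
      by (rule sum.cong) auto
    also have "\<dots> = 0" by (simp add: sum_subtractf)
    finally show ?thesis .
  qed
  have "(coupling E *v (\<Sum>a\<in>UNIV. blockvec (a::'n) v)) $ ci = 0" for ci
  proof -
    have "(coupling E *v (\<Sum>a\<in>UNIV. blockvec (a::'n) v)) $ ci = (\<Sum>a\<in>UNIV. (if fst ci = a then real CARD('n) - 1 else -1) * (E *v v) $ snd ci)"
      by (simp add: vec.sum sum_component coupling_bv)
    also have "\<dots> = (\<Sum>a\<in>UNIV. (if fst ci = a then real CARD('n) - 1 else -1)) * (E *v v) $ snd ci"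
      by (simp add: sum_distrib_right)
    also have "\<dots> = 0" using s by simp
    finally show ?thesis .
  qed
  then show ?thesis by (simp add: vec_eq_iff)
qed

lemma coupling_diff:
  assumes "a \<noteq> b"
  shows "coupling E *v (blockvec (a::'n::finite) v - blockvec b v) = real CARD('n) *\<^sub>R (blockvec a (E *v v) - blockvec b (E *v v))"
proof -
  have "(coupling E *v (blockvec a v - blockvec b v)) $ (ci::'n \<times> _) = (real CARD('n) *\<^sub>R (blockvec a (E *v v) - blockvec b (E *v v))) $ ci" for ci
    using assms by (auto simp: matrix_vector_mult_diff_distrib coupling_bv bv_comp algebra_simps)
  then show ?thesis by (simp add: vec_eq_iff)
qed

lemma part2_alg:
  fixes E Jt :: "real^'m^'m" and pv wv :: "real^'m" and a b :: "'n::finite"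
  assumes ab: "a \<noteq> b"
  shows "(- \<delta> *\<^sub>R coupling E + blockdiag Jt) *v ((1 / real CARD('n)) *\<^sub>R (blockvec a pv - blockvec b pv) + \<delta> *\<^sub>R (blockvec a wv - blockvec b wv))
         + \<delta>\<^sup>2 *\<^sub>R (coupling E *v (blockvec a wv - blockvec b wv))
       = (1 / real CARD('n)) *\<^sub>R (blockvec a (Jt *v pv) - blockvec b (Jt *v pv))
         + \<delta> *\<^sub>R (blockvec a (Jt *v wv - E *v pv) - blockvec b (Jt *v wv - E *v pv))"
proof -
  have n0: "real CARD('n) \<noteq> 0" by simp
  define C where "C = (coupling E :: real^('n \<times> 'm)^('n \<times> 'm))"
  define B where "B = (blockdiag Jt :: real^('n \<times> 'm)^('n \<times> 'm))"
  define U where "U = blockvec a pv - blockvec b pv"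
  define W where "W = blockvec a wv - blockvec b wv"
  define k where "k = 1 / real CARD('n)"
  define cw where "cw = C *v W"
  have 1: "(- \<delta> *\<^sub>R C + B) *v (k *\<^sub>R U + \<delta> *\<^sub>R W) = (- \<delta>) *\<^sub>R (C *v (k *\<^sub>R U + \<delta> *\<^sub>R W)) + B *v (k *\<^sub>R U + \<delta> *\<^sub>R W)"
    by (simp only: matrix_vector_mult_add_rdistrib scaleR_matrix_vector_assoc)
  have 2: "C *v (k *\<^sub>R U + \<delta> *\<^sub>R W) = k *\<^sub>R (C *v U) + \<delta> *\<^sub>R cw"
    by (simp only: cw_def matrix_vector_right_distrib matrix_vector_mult_scaleR)
  have 3: "C *v U = real CARD('n) *\<^sub>R (blockvec a (E *v pv) - blockvec b (E *v pv))"
    unfolding C_def U_def by (rule coupling_diff[OF ab])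
  have 4: "B *v (k *\<^sub>R U + \<delta> *\<^sub>R W) = k *\<^sub>R (blockvec a (Jt *v pv) - blockvec b (Jt *v pv)) + \<delta> *\<^sub>R (blockvec a (Jt *v wv) - blockvec b (Jt *v wv))"
    unfolding B_def U_def W_def
    by (simp only: matrix_vector_right_distrib matrix_vector_mult_scaleR matrix_vector_mult_diff_distrib blockdiag_bv)
  have "(- \<delta> *\<^sub>R C + B) *v (k *\<^sub>R U + \<delta> *\<^sub>R W) + \<delta>\<^sup>2 *\<^sub>R cw
       = k *\<^sub>R (blockvec a (Jt *v pv) - blockvec b (Jt *v pv))
         + \<delta> *\<^sub>R (blockvec a (Jt *v wv - E *v pv) - blockvec b (Jt *v wv - E *v pv))"
    unfolding 1 2 3 4
    by (simp add: vec_eq_iff bv_comp algebra_simps power2_eq_square n0 k_def)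
  then show ?thesis by (simp add: C_def B_def U_def W_def k_def cw_def)
qed

lemma calc_facts:
  fixes E :: "real^'m^'m"
    and F :: "real^'m \<Rightarrow> real^'m"
    and \<phi> :: "real \<Rightarrow> real^'m"
    and J :: "real \<Rightarrow> real^'m^'m"
    and \<Phi> :: "real \<Rightarrow> real \<Rightarrow> real^'m"
    and Pe :: "real \<Rightarrow> real"
  assumes F_smooth: "C2_on UNIV F"
    and \<phi>_sol: "\<forall>t. (\<phi> has_vector_derivative F (\<phi> t)) (at t)"
    and \<phi>_per: "min_period \<phi> P"
    and J_def: "\<forall>t. (F has_derivative (\<lambda>h. J t *v h)) (at (\<phi> t))"
    and \<epsilon>0_pos: "\<epsilon>0 > 0"
    and \<Phi>_smooth: "C2_on (UNIV \<times> {-\<epsilon>0<..<\<epsilon>0}) (\<lambda>(t, e). \<Phi> t e)"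
    and \<Phi>_sol: "\<forall>e\<in>{-\<epsilon>0<..<\<epsilon>0}. \<forall>t V.
        ((\<lambda>s. \<Phi> s e) has_vector_derivative V) (at t) \<longrightarrow> (mat 1 + e *\<^sub>R E) *v V = F (\<Phi> t e)"
    and \<Phi>_per: "\<forall>e\<in>{-\<epsilon>0<..<\<epsilon>0}. min_period (\<lambda>t. \<Phi> t e) (Pe e)"
    and \<Phi>_0: "\<forall>t. \<Phi> t 0 = \<phi> t"
    and Pe_diff: "Pe differentiable (at 0)"
  obtains w where
    "\<And>t. (w has_vector_derivative (J t *v w t - E *v F (\<phi> t))) (at t)"
    "\<And>t. ((\<lambda>t. F (\<phi> t)) has_vector_derivative (J t *v F (\<phi> t))) (at t)"
    "vector_derivative \<phi> (at 0) = F (\<phi> 0)"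
    "vector_derivative (\<lambda>e. \<Phi> 0 e) (at 0) = w 0"
    "F (\<phi> P) = F (\<phi> 0)"
    "w P = w 0 - deriv Pe 0 *\<^sub>R F (\<phi> 0)"
    "\<And>i j. continuous_on UNIV (\<lambda>t. J t $ i $ j)"
proof -
  define S where "S = (UNIV :: real set) \<times> {-\<epsilon>0<..<\<epsilon>0}"
  have Sopen: "open S" by (simp add: S_def open_Times)
  obtain f' f'' where
     fd1: "\<forall>x\<in>S. ((\<lambda>(t,e). \<Phi> t e) has_derivative blinfun_apply (f' x)) (at x)"
     and fd2: "\<forall>x\<in>S. (f' has_derivative blinfun_apply (f'' x)) (at x)"
     and fc: "continuous_on S f''"
    using \<Phi>_smooth unfolding C2_on_def S_def by blast
  obtain F' :: "real^'m \<Rightarrow> ((real^'m) \<Rightarrow>\<^sub>L (real^'m))" and F'' where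
     Fd1: "\<forall>x. (F has_derivative blinfun_apply (F' x)) (at x)"
     and Fd2: "\<forall>x. (F' has_derivative blinfun_apply (F'' x)) (at x)"
    using F_smooth unfolding C2_on_def by auto
  have inS: "(t, e) \<in> S" if "e \<in> {-\<epsilon>0<..<\<epsilon>0}" for t e using that by (simp add: S_def)
  have inS0: "(t, 0) \<in> S" for t using \<epsilon>0_pos by (simp add: S_def)
  define p where "p t = F (\<phi> t)" for t
  define w where "w t = f' (t, 0) (0, 1)" for t
  have J_eq: "J t *v h = F' (\<phi> t) h" for t h
    using has_derivative_unique[OF J_def[rule_format, of t] Fd1[rule_format, of "\<phi> t"]] by metis
  have pd: "(p has_vector_derivative J t *v p t) (at t)" for t
    unfolding p_def by (rule vd_comp[OF \<phi>_sol[rule_format] J_def[rule_format]])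
  have pair_t: "((\<lambda>s. (s, e)) has_vector_derivative (1::real, 0::real)) (at t)" for t e :: real
    by (intro has_vector_derivative_Pair has_vector_derivative_id has_vector_derivative_const)
  have pair_e: "((\<lambda>e. (t, e)) has_vector_derivative (0::real, 1::real)) (at e)" for t e :: real
    by (intro has_vector_derivative_Pair has_vector_derivative_id has_vector_derivative_const)
  have vd_t: "((\<lambda>s. \<Phi> s e) has_vector_derivative f' (t, e) (1, 0)) (at t)"
    if "e \<in> {-\<epsilon>0<..<\<epsilon>0}" for t e
    using vd_comp[OF pair_t fd1[rule_format, OF inS[OF that, of t]]] by simp
  have vd_e: "((\<lambda>e. \<Phi> t e) has_vector_derivative w t) (at 0)" for t
    using vd_comp[OF pair_e fd1[rule_format, OF inS0[of t]]] by (simp add: w_def)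
  have 0: "(0::real) \<in> {-\<epsilon>0<..<\<epsilon>0}" using \<epsilon>0_pos by simp
  have f'10: "f' (t, 0) (1, 0) = p t" for t
  proof -
    have "(\<phi> has_vector_derivative f' (t, 0) (1, 0)) (at t)"
      using vd_t[OF 0, of t] \<Phi>_0 by simp
    from vector_derivative_unique_at[OF this \<phi>_sol[rule_format, of t]] show ?thesis by (simp add: p_def)
  qed
  have wd: "(w has_vector_derivative f'' (t, 0) (1, 0) (0, 1)) (at t)" for t
  proof -
    have "((\<lambda>s. f' (s, 0)) has_vector_derivative f'' (t, 0) (1, 0)) (at t)"
      using vd_comp[OF pair_t fd2[rule_format, OF inS0[of t]]] by simp
    from bounded_linear.has_vector_derivative[OF blinfun.bounded_linear_left this]
    show ?thesis unfolding w_def .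
  qed
  have mixed: "f'' (t, 0) (0, 1) (1, 0) + E *v p t = J t *v w t" for t
  proof -
    define X where "X e = f' (t, e) (1, 0)" for e
    have Xd: "(X has_vector_derivative f'' (t, 0) (0, 1) (1, 0)) (at 0)"
    proof -
      have "((\<lambda>e. f' (t, e)) has_vector_derivative f'' (t, 0) (0, 1)) (at 0)"
        using vd_comp[OF pair_e fd2[rule_format, OF inS0[of t]]] by simp
      from bounded_linear.has_vector_derivative[OF blinfun.bounded_linear_left this]
      show ?thesis unfolding X_def .
    qed
    have h1d: "((\<lambda>e. X e + e *\<^sub>R (E *v X e)) has_vector_derivative (f'' (t, 0) (0, 1) (1, 0) + E *v X 0)) (at 0)"
    proof -
      have "((\<lambda>e. E *v X e) has_vector_derivative E *v f'' (t, 0) (0, 1) (1, 0)) (at 0)"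
        by (rule bounded_linear.has_vector_derivative[OF matrix_vector_mul_bounded_linear Xd])
      from has_vector_derivative_scaleR[OF DERIV_ident this]
      have "((\<lambda>e. e *\<^sub>R (E *v X e)) has_vector_derivative (E *v X 0)) (at 0)" by simp
      from has_vector_derivative_add[OF Xd this] show ?thesis .
    qed
    have Fd: "(F has_derivative (\<lambda>h. J t *v h)) (at ((\<lambda>e. \<Phi> t e) 0))" using J_def \<Phi>_0 by simp
    have h2d: "((\<lambda>e. F (\<Phi> t e)) has_vector_derivative J t *v w t) (at 0)"
      by (rule vd_comp[OF vd_e Fd])
    have eq: "X e + e *\<^sub>R (E *v X e) = F (\<Phi> t e)" if "e \<in> {-\<epsilon>0<..<\<epsilon>0}" for e
    proof -
      have "(mat 1 + e *\<^sub>R E) *v X e = F (\<Phi> t e)"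
        unfolding X_def by (rule \<Phi>_sol[rule_format, OF that vd_t[OF that, of t]])
      then show ?thesis by (simp add: matrix_vector_mult_add_rdistrib scaleR_matrix_vector_assoc[symmetric])
    qed
    have "((\<lambda>e. F (\<Phi> t e)) has_vector_derivative (f'' (t, 0) (0, 1) (1, 0) + E *v X 0)) (at 0)"
      by (rule has_vector_derivative_transform_within_open[OF h1d open_greaterThanLessThan 0 eq])
    from vector_derivative_unique_at[OF this h2d] show ?thesis using f'10[of t] by (simp add: X_def)
  qed
  have sym: "f'' (t, 0) (0, 1) (1, 0) = f'' (t, 0) (1, 0) (0, 1)" for t
  proof (rule schwarz[OF Sopen inS0])
    fix y assume "y \<in> S"
    then show "((\<lambda>(t,e). \<Phi> t e) has_derivative blinfun_apply (f' y)) (at y)"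
      "(f' has_derivative blinfun_apply (f'' y)) (at y)" using fd1 fd2 by blast+
  next
    show "continuous (at (t, 0)) f''" using fc Sopen inS0 continuous_on_eq_continuous_at by blast
  qed
  have wd2: "(w has_vector_derivative (J t *v w t - E *v p t)) (at t)" for t
  proof -
    have "J t *v w t = f'' (t, 0) (1, 0) (0, 1) + E *v p t" using mixed[of t] sym[of t] by simp
    then have "J t *v w t - E *v p t = f'' (t, 0) (1, 0) (0, 1)" by simp
    then show ?thesis using wd[of t] by simp
  qed
  have Pe0: "Pe 0 = P"
  proof -
    have "(\<lambda>t. \<Phi> t 0) = \<phi>" using \<Phi>_0 by (simp add: fun_eq_iff)
    then have "min_period \<phi> (Pe 0)" using \<Phi>_per 0 by metis
    then show ?thesis using min_period_unique[OF \<phi>_per] by simp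
  qed
  have pP: "p P = p 0"
    using \<phi>_per unfolding min_period_def p_def by (metis add_0)
  have wP: "w P = w 0 - deriv Pe 0 *\<^sub>R p 0"
  proof -
    let ?d = "deriv Pe 0"
    have Ped: "(Pe has_vector_derivative ?d) (at 0)"
      using Pe_diff DERIV_deriv_iff_real_differentiable has_real_derivative_iff_has_vector_derivative by blast
    have gd: "((\<lambda>e. (Pe e, e)) has_vector_derivative (?d, 1)) (at 0)"
      by (intro has_vector_derivative_Pair Ped has_vector_derivative_id)
    have fdP: "((\<lambda>(t,e). \<Phi> t e) has_derivative blinfun_apply (f' (P, 0))) (at ((\<lambda>e. (Pe e, e)) 0))"
      using fd1 inS0[of P] Pe0 by simp
    have "((\<lambda>e. (\<lambda>(t,e). \<Phi> t e) (Pe e, e)) has_vector_derivative f' (P, 0) (?d, 1)) (at 0)"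
      by (rule vd_comp[OF gd fdP])
    then have h3d: "((\<lambda>e. \<Phi> (Pe e) e) has_vector_derivative f' (P, 0) (?d, 1)) (at 0)" by simp
    have eq: "\<Phi> (Pe e) e = \<Phi> 0 e" if "e \<in> {-\<epsilon>0<..<\<epsilon>0}" for e
    proof -
      have "\<forall>t. \<Phi> (t + Pe e) e = \<Phi> t e" using \<Phi>_per that unfolding min_period_def by blast
      from this[rule_format, of 0] show ?thesis by simp
    qed
    have "((\<lambda>e. \<Phi> 0 e) has_vector_derivative f' (P, 0) (?d, 1)) (at 0)"
      by (rule has_vector_derivative_transform_within_open[OF h3d open_greaterThanLessThan 0 eq])
    from vector_derivative_unique_at[OF vd_e this] have "w 0 = f' (P, 0) (?d, 1)" .
    also have "f' (P, 0) (?d, 1) = ?d *\<^sub>R f' (P, 0) (1, 0) + f' (P, 0) (0, 1)"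
    proof -
      have "(?d, 1::real) = ?d *\<^sub>R (1::real, 0::real) + (0, 1)" by simp
      then show ?thesis by (metis blinfun.add_right blinfun.scaleR_right)
    qed
    finally show ?thesis using f'10[of P] pP by (simp add: w_def)
  qed
  have vd0: "vector_derivative \<phi> (at 0) = p 0"
    by (simp add: p_def vector_derivative_at[OF \<phi>_sol[rule_format]])
  have vde0: "vector_derivative (\<lambda>e. \<Phi> 0 e) (at 0) = w 0"
    by (rule vector_derivative_at[OF vd_e])
  have Jc: "continuous_on UNIV (\<lambda>t. J t $ i $ j)" for i j
  proof -
    have eqJ: "J t $ i $ j = (F' (\<phi> t) (axis j 1)) $ i" for t
    proof -
      have "(J t *v axis j 1) $ i = J t $ i $ j"
        by (simp add: matrix_vector_mult_def axis_def if_distrib[of "\<lambda>x. _ * x"] sum.delta cong: if_cong)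
      then show ?thesis using J_eq by simp
    qed
    have cF': "continuous_on UNIV F'"
      by (intro continuous_at_imp_continuous_on ballI has_derivative_continuous[OF Fd2[rule_format]])
    have c\<phi>: "continuous_on UNIV \<phi>"
      by (intro continuous_at_imp_continuous_on ballI has_vector_derivative_continuous[OF \<phi>_sol[rule_format]])
    have "continuous_on UNIV (\<lambda>t. F' (\<phi> t))" using continuous_on_compose2[OF cF' c\<phi>] by simp
    then have "continuous_on UNIV (\<lambda>t. (F' (\<phi> t) (axis j 1)) $ i)"
      by (rule bounded_linear.continuous_on[OF bounded_linear_compose[OF bounded_linear_vec_nth blinfun.bounded_linear_left]])
    then show ?thesis using eqJ by simp
  qed
  show ?thesis
  proof (rule that[of w])
    show "\<And>t. (w has_vector_derivative J t *v w t - E *v F (\<phi> t)) (at t)" using wd2 by (simp add: p_def)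
    show "\<And>t. ((\<lambda>t. F (\<phi> t)) has_vector_derivative J t *v F (\<phi> t)) (at t)" using pd by (simp add: p_def[abs_def])
    show "vector_derivative \<phi> (at 0) = F (\<phi> 0)" using vd0 by (simp add: p_def)
    show "vector_derivative (\<lambda>e. \<Phi> 0 e) (at 0) = w 0" by (rule vde0)
    show "F (\<phi> P) = F (\<phi> 0)" using pP by (simp add: p_def)
    show "w P = w 0 - deriv Pe 0 *\<^sub>R F (\<phi> 0)" using wP by (simp add: p_def)
    show "\<And>i j. continuous_on UNIV (\<lambda>t. J t $ i $ j)" by (rule Jc)
  qed
qed

theorem lemma2p1:
  fixes E :: "real^'m^'m"
    and F :: "real^'m \<Rightarrow> real^'m"
    and \<phi> :: "real \<Rightarrow> real^'m"
    and P :: real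
    and J :: "real \<Rightarrow> real^'m^'m"
    and X :: "real \<Rightarrow> real^'m^'m"
    and \<Phi> :: "real \<Rightarrow> real \<Rightarrow> real^'m"
    and Pe :: "real \<Rightarrow> real"
    and \<epsilon>0 :: real
    and \<Psi> :: "real \<Rightarrow> real \<Rightarrow> real^('n::finite \<times> 'm)^('n \<times> 'm)"
  assumes n2: "CARD('n) \<ge> 2"
    and F_smooth: "C2_on UNIV F"
    and \<phi>_sol: "\<forall>t. (\<phi> has_vector_derivative F (\<phi> t)) (at t)"
    and \<phi>_per: "min_period \<phi> P"
    and J_def: "\<forall>t. (F has_derivative (\<lambda>h. J t *v h)) (at (\<phi> t))"
    and X_fund: "principal_fundamental J X"
    and floquet: "floquet_hyperbolic (X P)"
    and \<epsilon>0_pos: "\<epsilon>0 > 0"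
    and \<Phi>_smooth: "C2_on (UNIV \<times> {-\<epsilon>0<..<\<epsilon>0}) (\<lambda>(t, e). \<Phi> t e)"
    and \<Phi>_sol: "\<forall>e\<in>{-\<epsilon>0<..<\<epsilon>0}. \<forall>t V.
        ((\<lambda>s. \<Phi> s e) has_vector_derivative V) (at t) \<longrightarrow> (mat 1 + e *\<^sub>R E) *v V = F (\<Phi> t e)"
    and \<Phi>_per: "\<forall>e\<in>{-\<epsilon>0<..<\<epsilon>0}. min_period (\<lambda>t. \<Phi> t e) (Pe e)"
    and \<Phi>_0: "\<forall>t. \<Phi> t 0 = \<phi> t"
    and Pe_diff: "Pe differentiable (at 0)"
    and \<Psi>_fund: "\<forall>\<delta>. principal_fundamental (\<lambda>t. - \<delta> *\<^sub>R coupling E + blockdiag (J t)) (\<Psi> \<delta>)"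
  shows "(\<forall>\<delta>\<ge>0. \<Psi> \<delta> P *v (\<Sum>a\<in>UNIV. blockvec a (vector_derivative \<phi> (at 0)))
              = (\<Sum>a\<in>UNIV. blockvec a (vector_derivative \<phi> (at 0))))
       \<and> (\<forall>a b. a \<noteq> b \<longrightarrow>
           (let \<zeta> = (\<lambda>\<delta>. (1 / real CARD('n)) *\<^sub>R
                        (blockvec a (vector_derivative \<phi> (at 0)) - blockvec b (vector_derivative \<phi> (at 0)))
                      + \<delta> *\<^sub>R (blockvec a (vector_derivative (\<lambda>e. \<Phi> 0 e) (at 0))
                                 - blockvec b (vector_derivative (\<lambda>e. \<Phi> 0 e) (at 0))))
            in \<exists>C \<delta>0. \<delta>0 > 0 \<and> (\<forall>\<delta>. 0 \<le> \<delta> \<and> \<delta> < \<delta>0 \<longrightarrow>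
                 norm (\<Psi> \<delta> P *v \<zeta> \<delta> - (1 - \<delta> * real CARD('n) * deriv Pe 0) *\<^sub>R \<zeta> \<delta>) \<le> C * \<delta>\<^sup>2)))"
proof -
  obtain w where wd: "\<And>t. (w has_vector_derivative (J t *v w t - E *v F (\<phi> t))) (at t)"
    and pd: "\<And>t. ((\<lambda>t. F (\<phi> t)) has_vector_derivative (J t *v F (\<phi> t))) (at t)"
    and vd0: "vector_derivative \<phi> (at 0) = F (\<phi> 0)"
    and vde0: "vector_derivative (\<lambda>e. \<Phi> 0 e) (at 0) = w 0"
    and pP: "F (\<phi> P) = F (\<phi> 0)"
    and wP: "w P = w 0 - deriv Pe 0 *\<^sub>R F (\<phi> 0)"
    and Jc: "\<And>i j. continuous_on UNIV (\<lambda>t. J t $ i $ j)"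
    by (rule calc_facts[OF F_smooth \<phi>_sol \<phi>_per J_def \<epsilon>0_pos \<Phi>_smooth \<Phi>_sol \<Phi>_per \<Phi>_0 Pe_diff]) blast
  define p where "p t = F (\<phi> t)" for t
  define A where "A \<delta> t = (- \<delta> *\<^sub>R coupling E + blockdiag (J t) :: real^('n \<times> 'm)^('n \<times> 'm))" for \<delta> t
  have \<Psi>0: "\<Psi> \<delta> 0 = mat 1" for \<delta> using \<Psi>_fund unfolding principal_fundamental_def by blast
  have \<Psi>d: "(\<Psi> \<delta> has_vector_derivative (A \<delta> t ** \<Psi> \<delta> t)) (at t)" for \<delta> t
    using \<Psi>_fund unfolding principal_fundamental_def A_def by blast
  have P0: "P \<ge> 0" using \<phi>_per unfolding min_period_def by simp
  define mC where "mC = (\<Sum>i\<in>UNIV. \<Sum>j\<in>UNIV. \<bar>(coupling E :: real^('n \<times> 'm)^('n \<times> 'm)) $ i $ j\<bar>)"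
  have mC0: "mC \<ge> 0" unfolding mC_def by (intro sum_nonneg) simp
  define mJ where "mJ t = (\<Sum>i\<in>UNIV. \<Sum>j\<in>UNIV. \<bar>(blockdiag (J t) :: real^('n \<times> 'm)^('n \<times> 'm)) $ i $ j\<bar>)" for t
  have mJc: "continuous_on {0..P} mJ"
  proof -
    have "continuous_on UNIV (\<lambda>t. if fst i = fst j then J t $ snd i $ snd j else 0)" for i j :: "'n \<times> 'm"
      by (cases "fst i = fst j") (simp_all add: Jc)
    then have "continuous_on UNIV mJ"
      unfolding mJ_def blockdiag_def by (auto intro!: continuous_intros)
    then show ?thesis by (rule continuous_on_subset) simp
  qed
  obtain Bj where Bj0: "Bj \<ge> 0" and Bj: "\<And>t. t \<in> {0..P} \<Longrightarrow> norm (mJ t) \<le> Bj"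
    using continuous_on_compact_bound[OF compact_Icc mJc] by blast
  have Ab: "norm (A \<delta> t *v x) \<le> (\<delta> * mC + Bj) * norm x" if "t \<in> {0..P}" "\<delta> \<ge> 0" for t \<delta> x
  proof -
    have "A \<delta> t *v x = (- \<delta>) *\<^sub>R (coupling E *v x) + blockdiag (J t) *v x"
      by (simp only: A_def matrix_vector_mult_add_rdistrib scaleR_matrix_vector_assoc)
    then have "norm (A \<delta> t *v x) \<le> norm ((- \<delta>) *\<^sub>R (coupling E *v x)) + norm (blockdiag (J t) *v x)"
      by (simp only: norm_triangle_ineq)
    moreover have "norm ((- \<delta>) *\<^sub>R (coupling E *v x)) = \<delta> * norm (coupling E *v x :: real^('n \<times> 'm))"
      using that(2) by simp
    ultimately have "norm (A \<delta> t *v x) \<le> \<delta> * norm (coupling E *v x) + norm (blockdiag (J t) *v x)"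
      by (simp only:)
    also have "\<dots> \<le> \<delta> * (mC * norm x) + mJ t * norm x"
      by (intro add_mono mult_left_mono that(2)) (simp_all add: mC_def mJ_def msum_bound)
    also have "\<dots> \<le> \<delta> * (mC * norm x) + Bj * norm x"
      using Bj[OF that(1)] by (intro add_left_mono mult_right_mono) auto
    finally show ?thesis by (simp add: algebra_simps)
  qed
  have part1: "\<Psi> \<delta> P *v (\<Sum>a\<in>UNIV. blockvec a (vector_derivative \<phi> (at 0))) = (\<Sum>a\<in>UNIV. blockvec a (vector_derivative \<phi> (at 0)))"
    if \<delta>: "\<delta> \<ge> 0" for \<delta>
  proof -
    define Z where "Z t = (\<Sum>a\<in>UNIV. blockvec (a::'n) (p t))" for t
    have Zd: "(Z has_vector_derivative (A \<delta> t *v Z t + (\<lambda>_. 0) t)) (at t)" for t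
    proof -
      have "(Z has_vector_derivative (\<Sum>a\<in>UNIV. blockvec a (J t *v p t))) (at t)"
        unfolding Z_def
        by (intro has_vector_derivative_sum bounded_linear.has_vector_derivative[OF bl_bv])
           (use pd in \<open>simp add: p_def[abs_def]\<close>)
      moreover have "A \<delta> t *v Z t = (\<Sum>a\<in>UNIV. blockvec a (J t *v p t))"
      proof -
        have "A \<delta> t *v Z t = (- \<delta>) *\<^sub>R (coupling E *v Z t) + blockdiag (J t) *v Z t"
          by (simp only: A_def matrix_vector_mult_add_rdistrib scaleR_matrix_vector_assoc)
        also have "coupling E *v Z t = 0" unfolding Z_def by (rule coupling_sum)
        also have "blockdiag (J t) *v Z t = (\<Sum>a\<in>UNIV. blockvec a (J t *v p t))"
          unfolding Z_def by (simp add: vec.sum blockdiag_bv)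
        finally show ?thesis by simp
      qed
      ultimately show ?thesis by simp
    qed
    have "norm (Z P - \<Psi> \<delta> P *v Z 0) \<le> 0 * sqrt (P * exp ((2*(\<delta>*mC+Bj)+1)*P))"
    proof (rule compare[where \<Psi>="\<Psi> \<delta>" and A="A \<delta>" and Z=Z and H="\<lambda>_. 0" and T=P and L="\<delta>*mC+Bj" and K=0])
      show "\<Psi> \<delta> 0 = mat 1" by (rule \<Psi>0)
      show "\<And>t. (\<Psi> \<delta> has_vector_derivative A \<delta> t ** \<Psi> \<delta> t) (at t)" by (rule \<Psi>d)
      show "\<And>t. (Z has_vector_derivative A \<delta> t *v Z t + (\<lambda>_. 0) t) (at t)" by (rule Zd)
      show "0 \<le> P" by (rule P0)
      show "\<And>t x. t \<in> {0..P} \<Longrightarrow> norm (A \<delta> t *v x) \<le> (\<delta> * mC + Bj) * norm x" using Ab \<delta> by blast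
      show "\<And>t. t \<in> {0..P} \<Longrightarrow> norm ((\<lambda>_. 0::real^('n \<times> 'm)) t) \<le> 0" by simp
      show "0 \<le> \<delta> * mC + Bj" using \<delta> mC0 Bj0 by simp
      show "(0::real) \<le> 0" by simp
    qed
    then have "\<Psi> \<delta> P *v Z 0 = Z P" by simp
    also have "Z P = Z 0" by (simp add: Z_def p_def pP)
    finally show ?thesis by (simp add: Z_def p_def vd0)
  qed
  have part2: "\<exists>C \<delta>0. \<delta>0 > 0 \<and> (\<forall>\<delta>. 0 \<le> \<delta> \<and> \<delta> < \<delta>0 \<longrightarrow>
                 norm (\<Psi> \<delta> P *v \<zeta> \<delta> - (1 - \<delta> * real CARD('n) * deriv Pe 0) *\<^sub>R \<zeta> \<delta>) \<le> C * \<delta>\<^sup>2)"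
    if ab: "a \<noteq> b" and \<zeta>def: "\<zeta> = (\<lambda>\<delta>. (1 / real CARD('n)) *\<^sub>R
                        (blockvec a (vector_derivative \<phi> (at 0)) - blockvec b (vector_derivative \<phi> (at 0)))
                      + \<delta> *\<^sub>R (blockvec a (vector_derivative (\<lambda>e. \<Phi> 0 e) (at 0))
                                 - blockvec b (vector_derivative (\<lambda>e. \<Phi> 0 e) (at 0))))"
    for a b :: 'n and \<zeta>
  proof -
    define n where "n = real CARD('n)"
    have n0: "n > 0" by (simp add: n_def)
    define d where "d = deriv Pe 0"
    define U where "U t = blockvec a (p t) - blockvec b (p t)" for t
    define W where "W t = blockvec a (w t) - blockvec b (w t)" for t
    have wc: "continuous_on UNIV w"
      by (intro continuous_at_imp_continuous_on ballI has_vector_derivative_continuous[OF wd])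
    have Wc: "continuous_on {0..P} (\<lambda>t. coupling E *v W t)"
    proof -
      have "continuous_on UNIV (\<lambda>t. coupling E *v W t)"
        unfolding W_def
        by (intro bounded_linear.continuous_on[OF matrix_vector_mul_bounded_linear] continuous_on_diff
            bounded_linear.continuous_on[OF bl_bv] wc)
      then show ?thesis by (rule continuous_on_subset) simp
    qed
    obtain Kw where Kw0: "Kw \<ge> 0" and Kw: "\<And>t. t \<in> {0..P} \<Longrightarrow> norm (coupling E *v W t) \<le> Kw"
      using continuous_on_compact_bound[OF compact_Icc Wc] by blast
    define L where "L = mC + Bj"
    define sq where "sq = sqrt (P * exp ((2*L+1)*P))"
    have sq0: "sq \<ge> 0" using P0 by (simp add: sq_def)
    define C where "C = n * \<bar>d\<bar> * norm (W 0) + Kw * sq"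
    have main: "norm (\<Psi> \<delta> P *v \<zeta> \<delta> - (1 - \<delta> * n * d) *\<^sub>R \<zeta> \<delta>) \<le> C * \<delta>\<^sup>2"
      if \<delta>: "0 \<le> \<delta>" "\<delta> < 1" for \<delta>
    proof -
      define Z where "Z t = (1 / n) *\<^sub>R U t + \<delta> *\<^sub>R W t" for t
      define H where "H t = \<delta>\<^sup>2 *\<^sub>R (coupling E *v W t)" for t
      have Zd: "(Z has_vector_derivative (A \<delta> t *v Z t + H t)) (at t)" for t
      proof -
        have pd': "(p has_vector_derivative J t *v p t) (at t)" using pd by (simp add: p_def[abs_def])
        have wd': "(w has_vector_derivative J t *v w t - E *v p t) (at t)" using wd by (simp add: p_def)
        have "(Z has_vector_derivative (1 / n) *\<^sub>R (blockvec a (J t *v p t) - blockvec b (J t *v p t))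
               + \<delta> *\<^sub>R (blockvec a (J t *v w t - E *v p t) - blockvec b (J t *v w t - E *v p t))) (at t)"
          unfolding Z_def U_def W_def
          by (intro has_vector_derivative_add has_vector_derivative_diff
              bounded_linear.has_vector_derivative[OF bounded_linear_scaleR_right]
              bounded_linear.has_vector_derivative[OF bl_bv] pd' wd')
        moreover have "A \<delta> t *v Z t + H t = (1 / n) *\<^sub>R (blockvec a (J t *v p t) - blockvec b (J t *v p t))
               + \<delta> *\<^sub>R (blockvec a (J t *v w t - E *v p t) - blockvec b (J t *v w t - E *v p t))"
          unfolding A_def Z_def H_def U_def W_def n_def by (rule part2_alg[OF ab])
        ultimately show ?thesis by simp
      qed
      have cmp: "norm (Z P - \<Psi> \<delta> P *v Z 0) \<le> (\<delta>\<^sup>2 * Kw) * sqrt (P * exp ((2*L+1)*P))"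
      proof (rule compare[where \<Psi>="\<Psi> \<delta>" and A="A \<delta>" and Z=Z and H=H and T=P and L=L and K="\<delta>\<^sup>2 * Kw"])
        show "\<Psi> \<delta> 0 = mat 1" by (rule \<Psi>0)
        show "\<And>t. (\<Psi> \<delta> has_vector_derivative A \<delta> t ** \<Psi> \<delta> t) (at t)" by (rule \<Psi>d)
        show "\<And>t. (Z has_vector_derivative A \<delta> t *v Z t + H t) (at t)" by (rule Zd)
        show "0 \<le> P" by (rule P0)
        show "norm (A \<delta> t *v x) \<le> L * norm x" if "t \<in> {0..P}" for t x
        proof -
          have "norm (A \<delta> t *v x) \<le> (\<delta> * mC + Bj) * norm x" using Ab[OF that \<delta>(1)] .
          also have "\<dots> \<le> L * norm x" unfolding L_def
            using \<delta> mC0 by (intro mult_right_mono) (auto simp: mult_left_le_one_le)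
          finally show ?thesis .
        qed
        show "norm (H t) \<le> \<delta>\<^sup>2 * Kw" if "t \<in> {0..P}" for t
          using Kw[OF that] by (simp add: H_def mult_left_mono)
        show "0 \<le> L" using mC0 Bj0 by (simp add: L_def)
        show "0 \<le> \<delta>\<^sup>2 * Kw" using Kw0 by simp
      qed
      have Z0: "\<zeta> \<delta> = Z 0" by (simp add: \<zeta>def Z_def U_def W_def n_def p_def vd0 vde0)
      have ZP: "Z P - (1 - \<delta> * n * d) *\<^sub>R Z 0 = (\<delta>\<^sup>2 * n * d) *\<^sub>R W 0"
      proof -
        have UP: "U P = U 0" by (simp add: U_def p_def pP)
        have WP: "W P = W 0 - d *\<^sub>R U 0"
          by (simp add: W_def U_def wP d_def p_def vec_eq_iff bv_comp)
        show ?thesis unfolding Z_def UP WP using n0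
          by (simp add: vec_eq_iff algebra_simps power2_eq_square)
      qed
      have "\<Psi> \<delta> P *v \<zeta> \<delta> - (1 - \<delta> * n * d) *\<^sub>R \<zeta> \<delta>
            = (Z P - (1 - \<delta> * n * d) *\<^sub>R Z 0) - (Z P - \<Psi> \<delta> P *v Z 0)"
        by (simp add: Z0)
      also have "norm \<dots> \<le> norm (Z P - (1 - \<delta> * n * d) *\<^sub>R Z 0) + norm (Z P - \<Psi> \<delta> P *v Z 0)"
        by (rule norm_triangle_ineq4)
      also have "\<dots> \<le> \<delta>\<^sup>2 * (n * \<bar>d\<bar> * norm (W 0)) + (\<delta>\<^sup>2 * Kw) * sq"
        using cmp unfolding ZP sq_def using n0 by (simp add: abs_mult)
      also have "\<dots> = C * \<delta>\<^sup>2" by (simp add: C_def algebra_simps)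
      finally show ?thesis .
    qed
    show ?thesis
      by (rule exI[of _ C], rule exI[of _ 1]) (use main in \<open>simp add: n_def d_def\<close>)
  qed
  show ?thesis
    unfolding Let_def using part1 part2 by blast
qed


end
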